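(* Let $M$ be a $3$-connected matroid with $r(M)\ge 4$, and let $C^*$ and $D^*$ be distinct cocircuits of $M$. Then $r_M(C^*\cup D^* )\ge 4$. *)

theory Defs
  imports Main
begin

definition matroid :: "'a set \<Rightarrow> ('a set \<Rightarrow> bool) \<Rightarrow> bool" where
  "matroid E indep \<longleftrightarrow>
     finite E \<and> indep {} \<and>
     (\<forall>X. indep X \<longrightarrow> X \<subseteq> E) \<and>
     (\<forall>X Y. indep Y \<and> X \<subseteq> Y \<longrightarrow> indep X) \<and>
     (\<forall>X Y. indep X \<and> indep Y \<and> card X < card Y \<longrightarrow> (\<exists>y\<in>Y - X. indep (insert y X)))"

definition mrank :: "('a set \<Rightarrow> bool) \<Rightarrow> 'a set \<Rightarrow> nat" where
  "mrank indep X = Max {card I | I. I \<subseteq> X \<and> indep I}"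

definition basis :: "('a set \<Rightarrow> bool) \<Rightarrow> 'a set \<Rightarrow> bool" where
  "basis indep B \<longleftrightarrow> indep B \<and> (\<forall>B'. indep B' \<and> B \<subseteq> B' \<longrightarrow> B' = B)"

definition circuit :: "'a set \<Rightarrow> ('a set \<Rightarrow> bool) \<Rightarrow> 'a set \<Rightarrow> bool" where
  "circuit E indep C \<longleftrightarrow> C \<subseteq> E \<and> \<not> indep C \<and> (\<forall>D. D \<subset> C \<longrightarrow> indep D)"

definition dual_indep :: "'a set \<Rightarrow> ('a set \<Rightarrow> bool) \<Rightarrow> 'a set \<Rightarrow> bool" where
  "dual_indep E indep X \<longleftrightarrow> X \<subseteq> E \<and> (\<exists>B. basis indep B \<and> X \<inter> B = {})"

definition cocircuit :: "'a set \<Rightarrow> ('a set \<Rightarrow> bool) \<Rightarrow> 'a set \<Rightarrow> bool" where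
  "cocircuit E indep C \<longleftrightarrow> circuit E (dual_indep E indep) C"

definition conn_fn :: "'a set \<Rightarrow> ('a set \<Rightarrow> bool) \<Rightarrow> 'a set \<Rightarrow> int" where
  "conn_fn E indep X = int (mrank indep X) + int (mrank indep (E - X)) - int (mrank indep E)"

definition k_separation :: "'a set \<Rightarrow> ('a set \<Rightarrow> bool) \<Rightarrow> nat \<Rightarrow> 'a set \<Rightarrow> bool" where
  "k_separation E indep k X \<longleftrightarrow>
     X \<subseteq> E \<and> card X \<ge> k \<and> card (E - X) \<ge> k \<and> conn_fn E indep X < int k"

definition n_connected :: "'a set \<Rightarrow> ('a set \<Rightarrow> bool) \<Rightarrow> nat \<Rightarrow> bool" where
  "n_connected E indep n \<longleftrightarrow> (\<forall>k X. 1 \<le> k \<and> k < n \<longrightarrow> \<not> k_separation E indep k X)"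

end

theory Submission
  imports Defs
begin

lemma m_fin: "matroid E indep \<Longrightarrow> finite E" by (simp add: matroid_def)
lemma m_sub: "matroid E indep \<Longrightarrow> indep X \<Longrightarrow> X \<subseteq> E" by (simp add: matroid_def)
lemma m_empty: "matroid E indep \<Longrightarrow> indep {}" by (simp add: matroid_def)
lemma m_down: "matroid E indep \<Longrightarrow> indep Y \<Longrightarrow> X \<subseteq> Y \<Longrightarrow> indep X"
  unfolding matroid_def by blast
lemma m_aug: "matroid E indep \<Longrightarrow> indep X \<Longrightarrow> indep Y \<Longrightarrow> card X < card Y \<Longrightarrow> \<exists>y\<in>Y - X. indep (insert y X)"
  unfolding matroid_def by blast

lemma rank_set:
  assumes "matroid E indep"
  shows "finite {card I | I. I \<subseteq> X \<and> indep I}" "{card I | I. I \<subseteq> X \<and> indep I} \<noteq> {}"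
proof -
  have "{card I | I. I \<subseteq> X \<and> indep I} \<subseteq> {..card E}"
  proof
    fix n assume "n \<in> {card I | I. I \<subseteq> X \<and> indep I}"
    then obtain I where "n = card I" "indep I" by blast
    then show "n \<in> {..card E}" using m_sub[OF assms] m_fin[OF assms] card_mono by (metis atMost_iff)
  qed
  then show "finite {card I | I. I \<subseteq> X \<and> indep I}" using finite_subset finite_atMost by blast
  show "{card I | I. I \<subseteq> X \<and> indep I} \<noteq> {}" using m_empty[OF assms] by blast
qed

lemma rank_ex:
  assumes "matroid E indep"
  shows "\<exists>I. I \<subseteq> X \<and> indep I \<and> card I = mrank indep X"
proof -
  have "mrank indep X \<in> {card I | I. I \<subseteq> X \<and> indep I}"
    unfolding mrank_def using rank_set[OF assms] by (rule Max_in)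
  then obtain I where "I \<subseteq> X" "indep I" "mrank indep X = card I" by blast
  then show ?thesis by metis
qed

lemma rank_ge:
  assumes "matroid E indep" "I \<subseteq> X" "indep I"
  shows "card I \<le> mrank indep X"
proof -
  have "card I \<in> {card I | I. I \<subseteq> X \<and> indep I}" using assms(2,3) by blast
  then show ?thesis unfolding mrank_def using rank_set[OF assms(1)] Max_ge by blast
qed

lemma rank_card:
  assumes "matroid E indep" "finite X"
  shows "mrank indep X \<le> card X"
proof -
  obtain I where "I \<subseteq> X" "indep I" "card I = mrank indep X" using rank_ex[OF assms(1), of X] by blast
  then show ?thesis using card_mono[OF assms(2), of I] by simp
qed

lemma rank_le_E:
  assumes "matroid E indep"
  shows "mrank indep X \<le> mrank indep E"
proof -
  obtain I where "I \<subseteq> X" "indep I" "card I = mrank indep X" using rank_ex[OF assms, of X] by blast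
  then show ?thesis using rank_ge[OF assms, of I E] m_sub[OF assms] by simp
qed

lemma basis_card:
  assumes "matroid E indep" "indep B" "card B = mrank indep E"
  shows "basis indep B"
  unfolding basis_def
proof (intro conjI allI impI)
  fix B' assume h: "indep B' \<and> B \<subseteq> B'"
  then have "B' \<subseteq> E" using m_sub[OF assms(1)] by blast
  then have "card B' \<le> card B" using rank_ge[OF assms(1) _ ] h assms(3) by metis
  moreover have "finite B'" using h m_sub[OF assms(1)] m_fin[OF assms(1)] finite_subset by blast
  moreover have "card B \<le> card B'" using card_mono calculation(2) h by blast
  ultimately show "B' = B" using h card_subset_eq[of B' B] by simp
qed (rule assms(2))

lemma basis_card2:
  assumes "matroid E indep" "basis indep B"
  shows "card B = mrank indep E"
proof (rule ccontr)
  assume "card B \<noteq> mrank indep E"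
  moreover have "card B \<le> mrank indep E"
  proof -
    have "indep B" using assms(2) unfolding basis_def by blast
    then show ?thesis using rank_ge[OF assms(1) m_sub[OF assms(1)]] by blast
  qed
  ultimately have lt: "card B < mrank indep E" by simp
  obtain J where J: "J \<subseteq> E" "indep J" "card J = mrank indep E" using rank_ex[OF assms(1)] by blast
  obtain y where y: "y \<in> J - B" "indep (insert y B)"
  proof -
    have "indep B" using assms(2) unfolding basis_def by blast
    then obtain y where "y \<in> J - B" "indep (insert y B)" using m_aug[OF assms(1) _ J(2)] J(3) lt by fastforce
    then show ?thesis using that by blast
  qed
  then have "insert y B = B" using assms(2) unfolding basis_def by blast
  then show False using y by blast
qed

lemma basis_ex:
  assumes "matroid E indep"
  shows "\<exists>B. basis indep B"
  using rank_ex[OF assms, of E] basis_card[OF assms] by blast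

lemma subadd:
  assumes "matroid E indep"
  shows "mrank indep E \<le> mrank indep X + mrank indep (E - X)"
proof -
  obtain B where B: "B \<subseteq> E" "indep B" "card B = mrank indep E" using rank_ex[OF assms] by blast
  have fB: "finite B" using B m_fin[OF assms] finite_subset by blast
  have "card B = card (B \<inter> X) + card (B - X)"
    using fB by (rule card_Int_Diff)
  moreover have "card (B \<inter> X) \<le> mrank indep X"
    by (rule rank_ge[OF assms]) (auto intro: m_down[OF assms B(2)])
  moreover have "card (B - X) \<le> mrank indep (E - X)"
    by (rule rank_ge[OF assms]) (use B(1) in \<open>auto intro: m_down[OF assms B(2)]\<close>)
  ultimately show ?thesis using B by linarith
qed

lemma cocirc_nd:
  assumes "matroid E indep" "cocircuit E indep C" "basis indep B"
  shows "C \<inter> B \<noteq> {}"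
proof
  assume h: "C \<inter> B = {}"
  have "C \<subseteq> E" "\<not> dual_indep E indep C" using assms(2) unfolding cocircuit_def circuit_def by auto
  then show False using h assms(3) unfolding dual_indep_def by blast
qed

lemma cocirc_sub:
  assumes "cocircuit E indep C"
  shows "C \<subseteq> E"
  using assms unfolding cocircuit_def circuit_def by blast

lemma cocirc_rank:
  assumes "matroid E indep" "cocircuit E indep C"
  shows "mrank indep (E - C) < mrank indep E"
proof (rule ccontr)
  assume "\<not> ?thesis"
  then have "mrank indep (E - C) = mrank indep E" using rank_le_E[OF assms(1), of "E - C"] by simp
  then obtain I where I: "I \<subseteq> E - C" "indep I" "card I = mrank indep E"
  proof -
    obtain I where "I \<subseteq> E - C" "indep I" "card I = mrank indep (E - C)" using rank_ex[OF assms(1), of "E - C"] by blast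
    then show ?thesis using that \<open>mrank indep (E - C) = mrank indep E\<close> by simp
  qed
  then have "basis indep I" using basis_card[OF assms(1)] by blast
  then show False using cocirc_nd[OF assms] I by blast
qed

lemma cocirc_pt:
  assumes "matroid E indep" "cocircuit E indep C" "e \<in> C"
  shows "\<exists>B. basis indep B \<and> B \<subseteq> (E - C) \<union> {e}"
proof -
  have "C - {e} \<subset> C" using assms(3) by blast
  then have "dual_indep E indep (C - {e})"
    using assms(2) unfolding cocircuit_def circuit_def by blast
  then obtain B where "basis indep B" "(C - {e}) \<inter> B = {}" unfolding dual_indep_def by blast
  moreover have "B \<subseteq> E" using calculation(1) m_sub[OF assms(1)] unfolding basis_def by blast
  ultimately show ?thesis by blast
qed

lemma cocirc_notsub:
  assumes "matroid E indep" "cocircuit E indep C" "cocircuit E indep D" "C \<noteq> D"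
  shows "\<exists>e. e \<in> C \<and> e \<notin> D"
proof (rule ccontr)
  assume "\<not> ?thesis"
  then have "C \<subset> D" using assms(4) by blast
  then have "dual_indep E indep C" using assms(3) unfolding cocircuit_def circuit_def by blast
  then show False using assms(2) unfolding cocircuit_def circuit_def by blast
qed

lemma main_rank:
  assumes m: "matroid E indep" and c: "cocircuit E indep C" "cocircuit E indep D" "C \<noteq> D"
  shows "mrank indep (E - (C \<union> D)) + 2 \<le> mrank indep E"
proof (rule ccontr)
  assume a: "\<not> ?thesis"
  obtain I where I: "I \<subseteq> E - (C \<union> D)" "indep I" "card I = mrank indep (E - (C \<union> D))"
    using rank_ex[OF m] by blast
  have rC: "mrank indep (E - C) < mrank indep E" using cocirc_rank[OF m c(1)] .
  have rD: "mrank indep (E - D) < mrank indep E" using cocirc_rank[OF m c(2)] .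
  have "card I \<le> mrank indep (E - C)" using rank_ge[OF m, of I "E - C"] I by blast
  then have cI: "card I + 1 = mrank indep E" using a I rC by linarith
  obtain e where e: "e \<in> C" "e \<notin> D" using cocirc_notsub[OF m c] by blast
  obtain B where B: "basis indep B" "B \<subseteq> (E - C) \<union> {e}" using cocirc_pt[OF m c(1) e(1)] by blast
  have cB: "card B = mrank indep E" using basis_card2[OF m B(1)] .
  have iB: "indep B" using B(1) unfolding basis_def by simp
  have lt: "card I < card B" using cB cI by simp
  obtain y where y: "y \<in> B - I" "indep (insert y I)"
    using m_aug[OF m I(2) iB lt] by blast
  have fI: "finite I" using I m_fin[OF m] finite_subset by blast
  have ci: "card (insert y I) = mrank indep E" using y fI cI by simp
  show False
  proof (cases "y = e")
    case True
    have "insert y I \<subseteq> E - D" using I True e cocirc_sub[OF c(1)] by blast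
    from rank_ge[OF m this y(2)] show False using ci rD by simp
  next
    case False
    have "insert y I \<subseteq> E - C" using I False y B by blast
    from rank_ge[OF m this y(2)] show False using ci rC by simp
  qed
qed

theorem lemma3p4:
  fixes E :: "'a set" and indep :: "'a set \<Rightarrow> bool" and Cs Ds :: "'a set"
  assumes "matroid E indep"
    and "n_connected E indep 3"
    and "mrank indep E \<ge> 4"
    and "cocircuit E indep Cs" and "cocircuit E indep Ds"
    and "Cs \<noteq> Ds"
  shows "mrank indep (Cs \<union> Ds) \<ge> 4"
proof (rule ccontr)
  assume a: "\<not> ?thesis"
  note m = assms(1)
  define X where "X = Cs \<union> Ds"
  define Y where "Y = E - X"
  have XE: "X \<subseteq> E" using cocirc_sub assms(4,5) X_def by blast
  have fE: "finite E" using m_fin[OF m] .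
  have EY: "E - Y = X" using XE Y_def by blast
  have rY: "mrank indep Y + 2 \<le> mrank indep E" using main_rank[OF m assms(4,5,6)] X_def Y_def by simp
  have sub: "mrank indep E \<le> mrank indep X + mrank indep Y" using subadd[OF m, of X] Y_def by simp
  have rYc: "mrank indep Y \<le> card Y" using rank_card[OF m] fE Y_def by simp
  obtain e where e: "e \<in> Cs" "e \<notin> Ds" using cocirc_notsub[OF m assms(4,5,6)] by blast
  obtain f where f: "f \<in> Ds" "f \<notin> Cs" using cocirc_notsub[OF m assms(5,4)] assms(6) by metis
  have "{e, f} \<subseteq> X" using e f X_def by blast
  moreover have "finite X" using XE fE finite_subset by blast
  moreover have "e \<noteq> f" using e f by blast
  then have "card {e, f} = 2" by simp
  ultimately have cX: "card X \<ge> 2" using card_mono by metis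
  have conn: "conn_fn E indep X = int (mrank indep X) + int (mrank indep Y) - int (mrank indep E)"
    unfolding conn_fn_def Y_def by simp
  have rX: "mrank indep X \<le> 3" using a X_def by simp
  consider "card Y \<ge> 2" | "card Y = 1" | "card Y = 0" by linarith
  then show False
  proof cases
    case 1
    have "conn_fn E indep X < int 2" using conn rX rY by linarith
    then have "k_separation E indep 2 X" unfolding k_separation_def
      using XE cX 1 by (simp add: Y_def[symmetric])
    then show False using assms(2) unfolding n_connected_def by auto
  next
    case 2
    have "conn_fn E indep X < int 1" using conn rX rY rYc 2 assms(3) by linarith
    then have "k_separation E indep 1 X" unfolding k_separation_def
      using XE cX 2 by (simp add: Y_def[symmetric])
    then show False using assms(2) unfolding n_connected_def by auto
  next
    case 3
    then show False using rYc sub rX assms(3) by linarith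
  qed
qed

end
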